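(* Let $0<\mu<1$, $\bar\mu=1-\mu$, $0\le\lambda<1$, and let $\theta(t)$ be the largest eigenvalue of $G_t=D_t[\gamma_1\gamma_1'+\lambda(I-\gamma_1\gamma_1')]D_t$, where $D_t=\mathrm{diag}(1,e^{t/2})$ and $\gamma_1=(\sqrt{\bar\mu},\sqrt\mu)'$. Define $I_\theta(x)=\sup_{t\in\mathbb R}\{tx-\log\theta(t)\}$. Then for every $x\in(0,1)$, with $\bar x=1-x$ and $\Delta=1+\dfrac{4\lambda x\bar x}{\mu\bar\mu(1-\lambda)^2}$, $$I_\theta(x)=-x\log\left[\frac{\mu+\bar\mu\lambda}{1-2\bar x/(\sqrt\Delta+1)}\right]-\bar x\log\left[\frac{\bar\mu+\mu\lambda}{1-2x/(\sqrt\Delta+1)}\right],$$ the supremum being attained at $t_0=\log\left[\dfrac{(\bar\mu+\mu\lambda)[\sqrt\Delta-(\bar x-x)]}{(\mu+\bar\mu\lambda)[\sqrt\Delta+(\bar x-x)]}\right]$.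
   Context: $I$ is the $2\times2$ identity matrix. $\theta(t)$ is the Perron eigenvalue governing the moment generating function of partial sums of the stationary two-state Markov chain on $\{0,1\}$ with transition matrix $\lambda I+(1-\lambda)\mathbf 1(\bar\mu,\mu)$, where $\mathbf 1=(1,1)'$. *)

theory Defs
  imports "HOL-Analysis.Analysis"
begin

definition gamma1 :: "real \<Rightarrow> real^2" where
  "gamma1 \<mu> = vector [sqrt (1 - \<mu>), sqrt \<mu>]"

definition outer :: "real^2 \<Rightarrow> real^2^2" where
  "outer v = (\<chi> i j. v $ i * v $ j)"

definition Dmat :: "real \<Rightarrow> real^2^2" where
  "Dmat t = (\<chi> i j. if i = j then (if i = 1 then 1 else exp (t / 2)) else 0)"

definition Gmat :: "real \<Rightarrow> real \<Rightarrow> real \<Rightarrow> real^2^2" where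
  "Gmat \<mu> lam t = Dmat t ** (outer (gamma1 \<mu>) + lam *\<^sub>R (mat 1 - outer (gamma1 \<mu>))) ** Dmat t"

definition largest_eigenvalue :: "real^2^2 \<Rightarrow> real" where
  "largest_eigenvalue A = Max {l. \<exists>v. v \<noteq> 0 \<and> A *v v = l *\<^sub>R v}"

definition theta :: "real \<Rightarrow> real \<Rightarrow> real \<Rightarrow> real" where
  "theta \<mu> lam t = largest_eigenvalue (Gmat \<mu> lam t)"

definition I_theta :: "real \<Rightarrow> real \<Rightarrow> real \<Rightarrow> real" where
  "I_theta \<mu> lam x = (SUP t. t * x - ln (theta \<mu> lam t))"

end

theory Submission
  imports Defs
begin

lemma amgm: fixes u w :: real assumes "0 \<le> u" "u \<le> 1" shows "exp (u * w) \<le> (1 - u) + u * exp w"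
  using convex_onD[OF exp_convex, of u 0 w] assms by simp

lemma eig2:
  fixes A :: "real^2^2"
  assumes "A$1$2 = q" "A$2$1 = q" "q \<noteq> 0"
  shows "largest_eigenvalue A = (A$1$1 + A$2$2 + sqrt ((A$1$1 - A$2$2)^2 + 4*q^2)) / 2"
proof -
  define p where "p = A$1$1"
  define w where "w = A$2$2"
  define sd where "sd = sqrt ((p - w)^2 + 4*q^2)"
  have sd2: "sd^2 = (p - w)^2 + 4*q^2" unfolding sd_def by simp
  have sd0: "sd \<ge> 0" unfolding sd_def by simp
  define S where "S = {l. \<exists>v. v \<noteq> 0 \<and> A *v v = l *\<^sub>R v}"
  have mv: "(A *v v) $ 1 = p * v$1 + q * v$2" "(A *v v) $ 2 = q * v$1 + w * v$2" for v
    by (simp_all add: matrix_vector_mult_def sum_2 p_def w_def assms)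
  have nz: "v \<noteq> 0 \<longleftrightarrow> v$1 \<noteq> 0 \<or> v$2 \<noteq> 0" for v :: "real^2"
    by (auto simp: vec_eq_iff forall_2)
  have root: "(p - l) * (w - l) = q^2" if "l \<in> S" for l
  proof -
    from that obtain v where v: "v \<noteq> 0" "A *v v = l *\<^sub>R v" unfolding S_def by blast
    have e1: "p * v$1 + q * v$2 = l * v$1" using arg_cong[OF v(2), of "\<lambda>u. u$1"] mv by simp
    have e2: "q * v$1 + w * v$2 = l * v$2" using arg_cong[OF v(2), of "\<lambda>u. u$2"] mv by simp
    have a1: "((p - l) * (w - l) - q^2) * v$1 = 0" using e1 e2 by algebra
    have a2: "((p - l) * (w - l) - q^2) * v$2 = 0" using e1 e2 by algebra
    show ?thesis using a1 a2 v(1) nz by auto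
  qed
  define lp where "lp = (p + w + sd) / 2"
  have lpS: "lp \<in> S"
  proof -
    define v :: "real^2" where "v = vector [q, lp - p]"
    have rt: "(p - lp) * (w - lp) = q^2" unfolding lp_def using sd2 by (simp add: field_simps power2_eq_square)
    have "v \<noteq> 0" using nz[of v] assms(3) by (simp add: v_def)
    moreover have "A *v v = lp *\<^sub>R v"
      unfolding vec_eq_iff forall_2 using mv[of v] rt by (simp add: v_def algebra_simps power2_eq_square)
    ultimately show ?thesis unfolding S_def by blast
  qed
  have le: "l \<le> lp" if "l \<in> S" for l
  proof -
    have "(2*l - p - w)^2 = sd^2" using root[OF that] sd2 by algebra
    hence "\<bar>2*l - p - w\<bar> = sd" using sd0 by (metis abs_of_nonneg real_sqrt_abs real_sqrt_unique)
    thus ?thesis unfolding lp_def by (auto simp: abs_if split: if_splits)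
  qed
  have fin: "finite S"
  proof (rule finite_subset)
    show "S \<subseteq> {lp, p + w - lp}"
    proof
      fix l assume "l \<in> S"
      have "(2*l - p - w)^2 = sd^2" using root[OF \<open>l \<in> S\<close>] sd2 by algebra
      hence "\<bar>2*l - p - w\<bar> = sd" using sd0 by (metis abs_of_nonneg real_sqrt_abs real_sqrt_unique)
      thus "l \<in> {lp, p + w - lp}" unfolding lp_def by (auto simp: abs_if field_simps split: if_splits)
    qed
  qed simp
  have "Max S = lp" by (rule Max_eqI[OF fin le lpS])
  thus ?thesis unfolding largest_eigenvalue_def S_def[symmetric] lp_def sd_def p_def w_def .
qed

lemma Gent:
  assumes "0 \<le> \<mu>" "\<mu> \<le> 1"
  shows "Gmat \<mu> l t $1$1 = (1-\<mu>) + \<mu>*l"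
    "Gmat \<mu> l t $1$2 = (1-l) * (sqrt \<mu> * sqrt (1-\<mu>)) * exp (t/2)"
    "Gmat \<mu> l t $2$1 = (1-l) * (sqrt \<mu> * sqrt (1-\<mu>)) * exp (t/2)"
    "Gmat \<mu> l t $2$2 = exp t * (\<mu> + (1-\<mu>)*l)"
proof -
  have h: "\<And>c. sqrt \<mu> * (sqrt \<mu> * c) = \<mu> * c" using assms by (simp flip: mult.assoc)
  show "Gmat \<mu> l t $1$1 = (1-\<mu>) + \<mu>*l"
    "Gmat \<mu> l t $1$2 = (1-l) * (sqrt \<mu> * sqrt (1-\<mu>)) * exp (t/2)"
    "Gmat \<mu> l t $2$1 = (1-l) * (sqrt \<mu> * sqrt (1-\<mu>)) * exp (t/2)"
    "Gmat \<mu> l t $2$2 = exp t * (\<mu> + (1-\<mu>)*l)"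
  using assms
  by (simp_all add: h Gmat_def Dmat_def outer_def gamma1_def matrix_matrix_mult_def sum_2 mat_def
      algebra_simps flip: exp_add)
qed

lemma quad_le:
  fixes z T D :: real
  assumes "z^2 - T*z + D \<le> 0"
  shows "z \<le> (T + sqrt (T^2 - 4*D)) / 2"
proof -
  have "(2*z - T)^2 \<le> T^2 - 4*D" using assms by (simp add: power2_eq_square algebra_simps)
  hence "\<bar>2*z - T\<bar> \<le> sqrt (T^2 - 4*D)" using real_le_rsqrt real_sqrt_abs by (metis real_sqrt_le_mono)
  hence "2*z - T \<le> sqrt (T^2 - 4*D)" by linarith
  thus ?thesis by (simp add: field_simps)
qed

lemma quad_eq:
  fixes z T D :: real
  assumes "z^2 - T*z + D = 0" "T \<le> 2*z"
  shows "z = (T + sqrt (T^2 - 4*D)) / 2"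
proof -
  have "(2*z - T)^2 = T^2 - 4*D" using assms by (simp add: power2_eq_square algebra_simps)
  hence "sqrt (T^2 - 4*D) = sqrt ((2*z - T)^2)" by simp
  also have "\<dots> = 2*z - T" using assms(2) by simp
  finally have "sqrt (T^2 - 4*D) = 2*z - T" .
  thus ?thesis by (simp add: field_simps)
qed

lemma theta_formula:
  assumes "0 < \<mu>" "\<mu> < 1" "lam < 1"
  shows "theta \<mu> lam t = ((1-\<mu>+\<mu>*lam) + (\<mu>+(1-\<mu>)*lam)*exp t
     + sqrt (((1-\<mu>+\<mu>*lam) + (\<mu>+(1-\<mu>)*lam)*exp t)^2 - 4*(lam*exp t))) / 2"
proof -
  define q where "q = (1-lam) * (sqrt \<mu> * sqrt (1-\<mu>)) * exp (t/2)"
  have q0: "q \<noteq> 0" unfolding q_def using assms by simp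
  have qq: "q^2 = (1-lam)^2 * \<mu> * (1-\<mu>) * exp t"
    unfolding q_def using assms by (simp add: power_mult_distrib flip: exp_of_nat_mult)
  have "theta \<mu> lam t = ((1-\<mu>) + \<mu>*lam + exp t * (\<mu> + (1-\<mu>)*lam)
      + sqrt (((1-\<mu>) + \<mu>*lam - exp t * (\<mu> + (1-\<mu>)*lam))^2 + 4*q^2)) / 2"
    unfolding theta_def using eig2[of "Gmat \<mu> lam t" q] Gent[of \<mu> lam t] assms q_def q0 by simp
  also have "((1-\<mu>) + \<mu>*lam - exp t * (\<mu> + (1-\<mu>)*lam))^2 + 4*q^2
     = ((1-\<mu>+\<mu>*lam) + (\<mu>+(1-\<mu>)*lam)*exp t)^2 - 4*(lam*exp t)"
    unfolding qq by (simp add: power2_eq_square algebra_simps)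
  finally show ?thesis by (simp add: algebra_simps)
qed

lemma divK: fixes K N :: real shows "K \<noteq> 0 \<Longrightarrow> (1 + N / K) * K = K + N"
  by (simp add: field_simps)

theorem mainTheorem3:
  fixes \<mu> lam x :: real
  assumes "0 < \<mu>" "\<mu> < 1" "0 \<le> lam" "lam < 1" "0 < x" "x < 1"
  defines "\<mu>b \<equiv> 1 - \<mu>" and "xb \<equiv> 1 - x"
  defines "\<Delta> \<equiv> 1 + 4 * lam * x * xb / (\<mu> * \<mu>b * (1 - lam)\<^sup>2)"
  defines "V \<equiv> - x * ln ((\<mu> + \<mu>b * lam) / (1 - 2 * xb / (sqrt \<Delta> + 1)))
              - xb * ln ((\<mu>b + \<mu> * lam) / (1 - 2 * x / (sqrt \<Delta> + 1)))"
  defines "t0 \<equiv> ln (((\<mu>b + \<mu> * lam) * (sqrt \<Delta> - (xb - x)))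
                    / ((\<mu> + \<mu>b * lam) * (sqrt \<Delta> + (xb - x))))"
  shows "I_theta \<mu> lam x = V
         \<and> (\<forall>t. t * x - ln (theta \<mu> lam t) \<le> V)
         \<and> t0 * x - ln (theta \<mu> lam t0) = V"
proof -
  define a where "a = \<mu>b + \<mu> * lam"
  define b where "b = \<mu> + \<mu>b * lam"
  define r where "r = sqrt \<Delta>"
  define d where "d = xb - x"
  have a0: "a > 0" unfolding a_def \<mu>b_def using assms by (simp add: add_pos_nonneg)
  have b0: "b > 0" unfolding b_def \<mu>b_def using assms by (simp add: add_pos_nonneg)
  have abl: "a * b - lam = (1-lam)^2 * \<mu> * \<mu>b"
    unfolding a_def b_def \<mu>b_def by (simp add: power2_eq_square algebra_simps)
  have den: "\<mu> * \<mu>b * (1 - lam)\<^sup>2 > 0" unfolding \<mu>b_def using assms by simp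
  have D1: "\<Delta> \<ge> 1" unfolding \<Delta>_def using assms den unfolding xb_def by simp
  have r1: "r \<ge> 1" unfolding r_def using D1 by simp
  have rr: "r^2 = \<Delta>" unfolding r_def using D1 by simp
  have hr: "r^2 * (a*b - lam) = (a*b - lam) + 4 * lam * x * xb"
  proof -
    have hD: "\<Delta> * (\<mu> * \<mu>b * (1 - lam)\<^sup>2) = \<mu> * \<mu>b * (1 - lam)\<^sup>2 + 4 * lam * x * xb"
      unfolding \<Delta>_def using den divK[of "\<mu> * \<mu>b * (1 - lam)\<^sup>2" "4 * lam * x * xb"] by linarith
    show ?thesis unfolding rr abl using hD by (simp add: mult_ac)
  qed
  have dlt: "\<bar>d\<bar> < 1" unfolding d_def xb_def using assms by simp
  have rpd: "r + d > 0" "r - d > 0" using r1 dlt by linarith+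
  define s0 where "s0 = a * (r - d) / (b * (r + d))"
  define z0 where "z0 = a * (r + 1) / (r + d)"
  define c0 where "c0 = lam * (r - d) / (b * (r + 1))"
  have s00: "s0 > 0" unfolding s0_def using a0 b0 rpd by simp
  have z00: "z0 > 0" unfolding z0_def using a0 r1 rpd by simp
  have c00: "c0 \<ge> 0" unfolding c0_def using assms b0 r1 rpd by simp
  have nz: "r + d \<noteq> 0" "r + 1 \<noteq> 0" "a \<noteq> 0" "b \<noteq> 0" "r - d \<noteq> 0" using a0 b0 rpd r1 by auto
  have "c0 * z0 = lam * s0" unfolding c0_def s0_def z0_def using nz
    by (simp add: divide_simps)
  hence c0e: "c0 = lam * s0 / z0" using z00 by (simp add: field_simps)
  have t0e: "t0 = ln s0" unfolding t0_def s0_def a_def b_def r_def d_def ..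
  have es0: "exp t0 = s0" using t0e s00 by simp
  have Ve: "V = t0 * x - ln z0"
  proof -
    have f1: "1 - 2 * xb / (sqrt \<Delta> + 1) = (r - d) / (r + 1)"
      unfolding r_def[symmetric] d_def xb_def using r1 by (simp add: field_simps)
    have f2: "1 - 2 * x / (sqrt \<Delta> + 1) = (r + d) / (r + 1)"
      unfolding r_def[symmetric] d_def xb_def using r1 by (simp add: field_simps)
    have l1: "ln (b / ((r - d) / (r + 1))) = ln b + ln (r + 1) - ln (r - d)"
      using b0 rpd r1 by (simp add: ln_div ln_mult)
    have l2: "ln (a / ((r + d) / (r + 1))) = ln a + ln (r + 1) - ln (r + d)"
      using a0 rpd r1 by (simp add: ln_div ln_mult)
    have l3: "ln s0 = ln a + ln (r - d) - ln b - ln (r + d)"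
      unfolding s0_def using a0 b0 rpd by (simp add: ln_div ln_mult)
    have l4: "ln z0 = ln a + ln (r + 1) - ln (r + d)"
      unfolding z0_def using a0 rpd r1 by (simp add: ln_div ln_mult)
    show ?thesis unfolding V_def f1 f2 b_def[symmetric] a_def[symmetric] l1 l2 t0e l3 l4
      by (simp add: xb_def algebra_simps)
  qed
  define K where "K = b * (r+1) * (r+d)"
  have K0: "K \<noteq> 0" unfolding K_def using nz by simp
  have zK: "z0 * K = a * b * (r+1)^2" unfolding z0_def K_def using nz by (simp add: power2_eq_square)
  have cK: "c0 * K = lam * (r^2 - d^2)"
  proof -
    have "c0 * K = (lam*(r-d)/(b*(r+1)) * (b*(r+1))) * (r+d)" unfolding c0_def K_def by (simp only: mult.assoc)
    also have "\<dots> = lam*(r-d)*(r+d)" using nz by simp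
    finally show ?thesis by (simp add: power2_eq_square algebra_simps)
  qed
  have sK: "s0 * K = a * (r-d) * (r+1)"
  proof -
    have "s0 * K = (a*(r-d)/(b*(r+d)) * (b*(r+d))) * (r+1)" unfolding s0_def K_def by (simp only: mult_ac)
    also have "\<dots> = a*(r-d)*(r+1)" using nz by simp
    finally show ?thesis .
  qed
  have E1: "z0 * xb + c0 * x = a"
  proof -
    have "a * b * (r+1)^2 * xb + lam * x * (r^2 - d^2) = a * b * (r+1) * (r+d)"
      using hr unfolding d_def xb_def by algebra
    hence eq: "xb * (z0 * K) + x * (c0 * K) = a * K" using zK cK K_def by algebra
    have "(z0 * xb + c0 * x) * K = xb * (z0 * K) + x * (c0 * K)" by (simp add: algebra_simps)
    hence "(z0 * xb + c0 * x) * K = a * K" using eq by simp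
    thus ?thesis using K0 by simp
  qed
  have E2: "z0 * x + c0 * xb = b * s0"
  proof -
    have "a * b * (r+1)^2 * x + lam * xb * (r^2 - d^2) = a * b * (r+1) * (r-d)"
      using hr unfolding d_def xb_def by algebra
    hence eq: "x * (z0 * K) + xb * (c0 * K) = b * (s0 * K)" using zK cK sK by algebra
    have "(z0 * x + c0 * xb) * K = x * (z0 * K) + xb * (c0 * K)" by (simp add: algebra_simps)
    hence "(z0 * x + c0 * xb) * K = (b * s0) * K" using eq by simp
    thus ?thesis using K0 by simp
  qed
  have zc: "c0 \<le> z0"
  proof -
    have rd: "r^2 - d^2 = (r-d)*(r+d)" by (simp add: power2_eq_square algebra_simps)
    have rd0: "r^2 - d^2 \<ge> 0" unfolding rd using rpd by simp
    have lab: "lam \<le> a * b" using abl den by (simp add: mult_ac)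
    have rd1: "r^2 - d^2 \<le> (r+1)^2" using r1 by (simp add: power2_eq_square algebra_simps)
    have "lam * (r^2 - d^2) \<le> a * b * (r^2 - d^2)"
      using lab rd0 by (rule mult_right_mono)
    also have "\<dots> \<le> a * b * (r+1)^2"
      using a0 b0 rd1 by (intro mult_left_mono) simp_all
    finally have "c0 * K \<le> z0 * K" unfolding cK zK .
    moreover have "K > 0" unfolding K_def using b0 rpd r1 by simp
    ultimately show ?thesis by simp
  qed
  have thf: "theta \<mu> lam t = (a + b * exp t + sqrt ((a + b * exp t)^2 - 4*(lam*exp t))) / 2" for t
    using theta_formula[of \<mu> lam t] assms unfolding a_def b_def \<mu>b_def by (simp add: algebra_simps)
  have bound: "t * x - ln (theta \<mu> lam t) \<le> V" for t
  proof -
    define u where "u = t - t0"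
    define z where "z = z0 * exp (x * u)"
    have z0': "z > 0" unfolding z_def using z00 by simp
    have et: "exp t = s0 * exp u" unfolding u_def es0[symmetric] by (simp flip: exp_add)
    have lz: "lam * exp t / z = c0 * exp (xb * u)"
      unfolding z_def et c0e xb_def using z00 by (simp add: field_simps exp_diff left_diff_distrib flip: exp_add)
    have A1: "exp (x * u) \<le> xb + x * exp u" using amgm[of x u] assms unfolding xb_def by simp
    have A2: "exp (xb * u) \<le> x + xb * exp u" using amgm[of xb u] assms unfolding xb_def by simp
    have "z + lam * exp t / z = z0 * exp (x * u) + c0 * exp (xb * u)" using lz z_def by simp
    also have "\<dots> \<le> z0 * (xb + x * exp u) + c0 * (x + xb * exp u)"
      using A1 A2 z00 c00 by (intro add_mono mult_left_mono) auto
    also have "\<dots> = (z0 * xb + c0 * x) + (z0 * x + c0 * xb) * exp u" by (simp add: algebra_simps)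
    also have "\<dots> = a + b * exp t" unfolding E1 E2 et by simp
    finally have "z + lam * exp t / z \<le> a + b * exp t" .
    hence "z * (z + lam * exp t / z) \<le> z * (a + b * exp t)" using z0' by (simp add: mult_left_mono)
    moreover have "z * (z + lam * exp t / z) = z^2 + lam * exp t" using z0' by (simp add: field_simps power2_eq_square)
    ultimately have "z^2 + lam * exp t \<le> z * (a + b * exp t)" by simp
    hence "z^2 - (a + b * exp t) * z + lam * exp t \<le> 0" by (simp add: algebra_simps)
    hence "z \<le> theta \<mu> lam t" unfolding thf by (rule quad_le)
    hence "ln z \<le> ln (theta \<mu> lam t)" using z0' by simp
    moreover have "ln z = ln z0 + x * u" unfolding z_def using z00 by (simp add: ln_mult)
    ultimately show ?thesis unfolding Ve u_def by (simp add: algebra_simps)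
  qed
  have att: "t0 * x - ln (theta \<mu> lam t0) = V"
  proof -
    have "z0 + c0 = a + b * s0" using E1 E2 unfolding xb_def by (simp add: algebra_simps)
    hence "z0^2 - (a + b * exp t0) * z0 + lam * exp t0 = 0"
      unfolding es0 c0e using z00 by (simp add: field_simps power2_eq_square)
    moreover have "a + b * exp t0 \<le> 2 * z0" using \<open>z0 + c0 = a + b * s0\<close> zc es0 by simp
    ultimately have "z0 = theta \<mu> lam t0" unfolding thf by (rule quad_eq)
    thus ?thesis unfolding Ve by simp
  qed
  have "I_theta \<mu> lam x = V" unfolding I_theta_def
    by (rule cSup_eq_maximum) (use att bound in auto)
  thus ?thesis using bound att by blast
qed

end
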